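(* Let $p>2$ be a prime and $\alpha\ge 3$ an integer, and let $n=p^\alpha$. Then the independent domination polynomial $D_i(\Gamma(\mathbb{Z}_n),x)$ is log-concave but not unimodal.
   Context: For an integer $n\ge 2$, the zero divisor graph $\Gamma(\mathbb{Z}_n)$ is the simple graph whose vertices are the nonzero zero divisors of $\mathbb{Z}_n$, with distinct vertices $a,b$ adjacent if and only if $ab\equiv 0\pmod n$. An independent dominating set of a graph $G$ is a set of pairwise non-adjacent vertices such that every vertex outside the set is adjacent to some vertex in it. If $d_i(G,k)$ denotes the number of independent dominating sets of $G$ of cardinality $k$, the independent domination polynomial is $D_i(G,x)=\sum_{k} d_i(G,k)x^k$. For a polynomial $\sum_{i=0}^b a_i x^i$ of degree $b$ (with $a_i=0$ for absent powers): it is unimodal if there is an index $0\le t\le b$ with $a_0\le a_1\le\dots\le a_t\ge a_{t+1}\ge\dots\ge a_b$; it is log-concave if $a_j^2\ge a_{j-1}a_{j+1}$ for all $1\le j\le b-1$. *)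

theory Defs
  imports "HOL-Computational_Algebra.Polynomial"
begin

definition zd_vertices :: "nat \<Rightarrow> nat set" where
  "zd_vertices n = {a. 0 < a \<and> a < n \<and> (\<exists>b. 0 < b \<and> b < n \<and> (a * b) mod n = 0)}"

definition zd_adj :: "nat \<Rightarrow> nat \<Rightarrow> nat \<Rightarrow> bool" where
  "zd_adj n a b \<longleftrightarrow> a \<noteq> b \<and> (a * b) mod n = 0"

definition indep_dom_set :: "nat \<Rightarrow> nat set \<Rightarrow> bool" where
  "indep_dom_set n S \<longleftrightarrow> S \<subseteq> zd_vertices n
     \<and> (\<forall>a\<in>S. \<forall>b\<in>S. \<not> zd_adj n a b)
     \<and> (\<forall>v\<in>zd_vertices n - S. \<exists>u\<in>S. zd_adj n v u)"

definition num_ids :: "nat \<Rightarrow> nat \<Rightarrow> nat" where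
  "num_ids n k = card {S. indep_dom_set n S \<and> card S = k}"

definition indep_dom_poly :: "nat \<Rightarrow> nat poly" where
  "indep_dom_poly n = (\<Sum>k\<le>card (zd_vertices n). monom (num_ids n k) k)"

definition unimodal :: "'a::{zero,linorder} poly \<Rightarrow> bool" where
  "unimodal p \<longleftrightarrow> (\<exists>t\<le>degree p.
      (\<forall>i<t. coeff p i \<le> coeff p (Suc i)) \<and>
      (\<forall>i. t \<le> i \<and> i < degree p \<longrightarrow> coeff p (Suc i) \<le> coeff p i))"

definition log_concave :: "'a::{comm_semiring_1,linorder} poly \<Rightarrow> bool" where
  "log_concave p \<longleftrightarrow> (\<forall>j. 1 \<le> j \<and> j + 1 \<le> degree p \<longrightarrow>
      coeff p (j - 1) * coeff p (j + 1) \<le> (coeff p j)^2)"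

end

theory Submission
  imports Defs
begin

context
  fixes p \<alpha> n :: nat
  assumes pr: "prime p" and p2: "p > 2" and a3: "\<alpha> \<ge> 3" and nd: "n = p ^ \<alpha>"
begin

lemma pe: "prime_elem p" using pr by (rule prime_imp_prime_elem)

lemma dvd_iff_v: "0 < a \<Longrightarrow> p ^ t dvd a \<longleftrightarrow> t \<le> multiplicity p a"
  by (rule power_dvd_iff_le_multiplicity) (use p2 in auto)

lemma mod0_iff: "0 < a \<Longrightarrow> 0 < b \<Longrightarrow> (a * b) mod n = 0 \<longleftrightarrow> \<alpha> \<le> multiplicity p a + multiplicity p b"
proof -
  assume a: "0 < a" and b: "0 < b"
  have "(a * b) mod n = 0 \<longleftrightarrow> p ^ \<alpha> dvd a * b" using nd by auto
  also have "\<dots> \<longleftrightarrow> \<alpha> \<le> multiplicity p (a * b)" using a b by (simp add: dvd_iff_v)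
  also have "multiplicity p (a * b) = multiplicity p a + multiplicity p b"
    using a b pe by (simp add: prime_elem_multiplicity_mult_distrib)
  finally show ?thesis .
qed

lemma verts: "zd_vertices n = {a. 0 < a \<and> a < n \<and> p dvd a}"
proof (intro set_eqI iffI)
  fix a assume "a \<in> zd_vertices n"
  then obtain b where ab: "0 < a" "a < n" "0 < b" "b < n" "(a * b) mod n = 0"
    unfolding zd_vertices_def by auto
  show "a \<in> {a. 0 < a \<and> a < n \<and> p dvd a}"
  proof (cases "p dvd a")
    case False
    then have "coprime a p" using pr prime_imp_coprime coprime_commute by blast
    then have "coprime a n" using nd by simp
    moreover have "n dvd a * b" using ab by auto
    ultimately have "n dvd b" by (metis coprime_commute coprime_dvd_mult_right_iff coprime_dvd_mult_left_iff)
    then show ?thesis using ab by (auto dest: dvd_imp_le)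
  qed (use ab in auto)
next
  fix a assume "a \<in> {a. 0 < a \<and> a < n \<and> p dvd a}"
  then have a: "0 < a" "a < n" "p dvd a" by auto
  then obtain c where c: "a = p * c" by auto
  have pos: "0 < p" using p2 by simp
  have "p ^ (\<alpha> - 1) < p ^ \<alpha>" using p2 a3 by (intro power_strict_increasing) auto
  moreover have "(a * p ^ (\<alpha> - 1)) mod n = 0"
  proof -
    have "\<alpha> = Suc (\<alpha> - 1)" using a3 by arith
    then have "p ^ \<alpha> = p * p ^ (\<alpha> - 1)" by (metis power_Suc)
    then have "a * p ^ (\<alpha> - 1) = c * p ^ \<alpha>" using c by simp
    then show ?thesis using nd by simp
  qed
  ultimately have "\<exists>b. 0 < b \<and> b < n \<and> (a * b) mod n = 0"
    using nd pos by (intro exI[of _ "p ^ (\<alpha> - 1)"]) auto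
  then show "a \<in> zd_vertices n" unfolding zd_vertices_def using a by auto
qed


lemma fin_V: "finite (zd_vertices n)"
  by (rule finite_subset[of _ "{..<n}"]) (auto simp: zd_vertices_def)

lemma v_bounds: "a \<in> zd_vertices n \<Longrightarrow> 1 \<le> multiplicity p a \<and> multiplicity p a < \<alpha>"
proof -
  assume "a \<in> zd_vertices n"
  then have a: "0 < a" "a < n" "p dvd a" using verts by auto
  have "1 \<le> multiplicity p a" using a dvd_iff_v[of a 1] by simp
  moreover have "\<not> p ^ \<alpha> dvd a" using a nd by (auto dest: dvd_imp_le)
  then have "multiplicity p a < \<alpha>" using a dvd_iff_v[of a \<alpha>] by simp
  ultimately show ?thesis by simp
qed

lemma pow_V: "1 \<le> m \<Longrightarrow> m < \<alpha> \<Longrightarrow> p ^ m \<in> zd_vertices n \<and> multiplicity p (p ^ m) = m"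
proof -
  assume m: "1 \<le> m" "m < \<alpha>"
  have "p ^ m < p ^ \<alpha>" using p2 m by (intro power_strict_increasing) auto
  moreover have "p dvd p ^ m" using m by (simp add: dvd_power)
  moreover have "0 < p ^ m" using p2 by simp
  ultimately show ?thesis using verts nd pe by simp
qed

lemma card_mult: "0 < d \<Longrightarrow> card {a::nat. 0 < a \<and> a < d * q \<and> d dvd a} = q - 1"
proof -
  assume d: "0 < d"
  have "{a::nat. 0 < a \<and> a < d * q \<and> d dvd a} = (\<lambda>i. d * i) ` {1..<q}"
  proof (intro set_eqI iffI)
    fix a assume "a \<in> {a::nat. 0 < a \<and> a < d * q \<and> d dvd a}"
    then obtain i where "a = d * i" "0 < d * i" "d * i < d * q" by auto
    then show "a \<in> (\<lambda>i. d * i) ` {1..<q}" using d by auto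
  qed (use d in auto)
  moreover have "inj_on (\<lambda>i. d * i) {1..<q}" using d by (auto simp: inj_on_def)
  ultimately show ?thesis by (simp add: card_image)
qed

lemma card_L: "1 \<le> t \<Longrightarrow> t \<le> \<alpha> \<Longrightarrow>
   card {a\<in>zd_vertices n. \<not> p ^ t dvd a} = p ^ (\<alpha> - 1) - p ^ (\<alpha> - t)"
proof -
  assume t: "1 \<le> t" "t \<le> \<alpha>"
  define A1 where "A1 = {a::nat. 0 < a \<and> a < p * p ^ (\<alpha> - 1) \<and> p dvd a}"
  define At where "At = {a::nat. 0 < a \<and> a < p ^ t * p ^ (\<alpha> - t) \<and> p ^ t dvd a}"
  have e1: "p * p ^ (\<alpha> - 1) = n" using nd a3 by (simp add: power_Suc[symmetric])
  have e2: "p ^ t * p ^ (\<alpha> - t) = n" using nd t by (simp add: power_add[symmetric])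
  have "{a\<in>zd_vertices n. \<not> p ^ t dvd a} = A1 - At"
    unfolding A1_def At_def e1 e2 verts by auto
  moreover have "At \<subseteq> A1" unfolding A1_def At_def e1 e2
    using t by (auto intro: dvd_trans[OF dvd_power[of t p]])
  moreover have "finite At" unfolding At_def by auto
  moreover have "card A1 = p ^ (\<alpha> - 1) - 1" unfolding A1_def using p2 by (intro card_mult) auto
  moreover have "card At = p ^ (\<alpha> - t) - 1" unfolding At_def using p2 by (intro card_mult) auto
  moreover have "p ^ (\<alpha> - t) \<le> p ^ (\<alpha> - 1)" using p2 t by (intro power_increasing) auto
  moreover have "1 \<le> p ^ (\<alpha> - t)" using p2 by simp
  ultimately show ?thesis by (simp add: card_Diff_subset)
qed

lemma ids_nonempty: "indep_dom_set n S \<Longrightarrow> S \<noteq> {}"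
proof
  assume "indep_dom_set n S" "S = {}"
  moreover have "p \<in> zd_vertices n" using pow_V[of 1] a3 by simp
  ultimately show False unfolding indep_dom_set_def by auto
qed

definition sz :: "nat \<Rightarrow> bool" where
  "sz c \<longleftrightarrow> (\<exists>m. \<alpha> \<le> 2 * m \<and> m < \<alpha> \<and> c = p ^ (\<alpha> - 1) - p ^ m + 1) \<or>
            (\<exists>k. \<alpha> = 2 * k + 1 \<and> c = p ^ (\<alpha> - 1) - p ^ k)"

lemma ids_size: "indep_dom_set n S \<Longrightarrow> sz (card S)"
proof -
  assume ids: "indep_dom_set n S"
  let ?V = "zd_vertices n"
  let ?v = "multiplicity p"
  have SV: "S \<subseteq> ?V" using ids unfolding indep_dom_set_def by auto
  then have finS: "finite S" using fin_V finite_subset by auto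
  have ne: "S \<noteq> {}" using ids_nonempty ids by auto
  define m where "m = Max (?v ` S)"
  have "m \<in> ?v ` S" unfolding m_def using finS ne by (intro Max_in) auto
  then obtain s where s: "s \<in> S" "?v s = m" by auto
  have mle: "\<And>a. a \<in> S \<Longrightarrow> ?v a \<le> m" unfolding m_def using finS by auto
  have mb: "1 \<le> m" "m < \<alpha>" using v_bounds[of s] s SV by auto
  define L where "L = {a\<in>?V. ?v a + m < \<alpha>}"
  have C1: "L \<subseteq> S"
  proof
    fix a assume aL: "a \<in> L"
    show "a \<in> S"
    proof (rule ccontr)
      assume "a \<notin> S"
      moreover have "a \<in> ?V" using aL unfolding L_def by auto
      ultimately obtain u where u: "u \<in> S" "zd_adj n a u" using ids unfolding indep_dom_set_def by blast
      have "0 < a" "0 < u" using aL u SV verts unfolding L_def by auto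
      then have "\<alpha> \<le> ?v a + ?v u" using u mod0_iff unfolding zd_adj_def by auto
      then show False using mle[OF u(1)] aL unfolding L_def by auto
    qed
  qed
  have C2: "\<And>a. a \<in> S \<Longrightarrow> a \<noteq> s \<Longrightarrow> a \<in> L"
  proof -
    fix a assume a: "a \<in> S" "a \<noteq> s"
    then have "\<not> zd_adj n a s" using ids s unfolding indep_dom_set_def by auto
    moreover have "0 < a" "0 < s" using a s SV verts by auto
    ultimately have "?v a + m < \<alpha>" using a s mod0_iff unfolding zd_adj_def by auto
    then show "a \<in> L" using a SV unfolding L_def by auto
  qed
  have SL: "S = insert s L" using C1 C2 s by auto
  have "L = {a\<in>?V. \<not> p ^ (\<alpha> - m) dvd a}"
    unfolding L_def using dvd_iff_v verts mb by auto
  then have cL: "card L = p ^ (\<alpha> - 1) - p ^ m"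
    using card_L[of "\<alpha> - m"] mb by simp
  have finL: "finite L" using C1 finS finite_subset by auto
  show "sz (card S)"
  proof (cases "\<alpha> \<le> 2 * m")
    case True
    then have "s \<notin> L" using s unfolding L_def by auto
    then have "card S = p ^ (\<alpha> - 1) - p ^ m + 1" using SL cL finL by simp
    then show ?thesis unfolding sz_def using True mb by blast
  next
    case False
    then have sL: "s \<in> L" using s SV unfolding L_def by auto
    have "\<alpha> = 2 * m + 1"
    proof (rule ccontr)
      assume "\<alpha> \<noteq> 2 * m + 1"
      then have "m + 1 < \<alpha>" "?v (p ^ (m + 1)) + m < \<alpha>" using False pow_V[of "m + 1"] by auto
      then have "p ^ (m + 1) \<in> L" using pow_V[of "m+1"] unfolding L_def by auto
      then have "?v (p ^ (m + 1)) \<le> m" using C1 mle by auto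
      then show False using pow_V[of "m+1"] \<open>m + 1 < \<alpha>\<close> by auto
    qed
    moreover have "card S = p ^ (\<alpha> - 1) - p ^ m" using SL sL cL by (simp add: insert_absorb)
    ultimately show ?thesis unfolding sz_def by blast
  qed
qed

lemma ids_witness: "1 \<le> m \<Longrightarrow> m < \<alpha> \<Longrightarrow> \<alpha> \<le> 2 * m + 1 \<Longrightarrow>
   indep_dom_set n (insert (p ^ m) {a\<in>zd_vertices n. multiplicity p a + m < \<alpha>})"
proof -
  assume mb: "1 \<le> m" "m < \<alpha>" "\<alpha> \<le> 2 * m + 1"
  let ?v = "multiplicity p"
  let ?s = "p ^ m"
  let ?L = "{a\<in>zd_vertices n. ?v a + m < \<alpha>}"
  have s: "?s \<in> zd_vertices n" "?v ?s = m" using pow_V mb by auto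
  have pos: "\<And>a. a \<in> zd_vertices n \<Longrightarrow> 0 < a" using verts by auto
  have indep: "\<forall>a\<in>insert ?s ?L. \<forall>b\<in>insert ?s ?L. \<not> zd_adj n a b"
  proof (intro ballI)
    fix a b assume a: "a \<in> insert ?s ?L" and b: "b \<in> insert ?s ?L"
    show "\<not> zd_adj n a b"
    proof
      assume adj: "zd_adj n a b"
      then have ab: "a \<noteq> b" unfolding zd_adj_def by auto
      have aV: "a \<in> zd_vertices n" and bV: "b \<in> zd_vertices n" using a b s by auto
      have "\<alpha> \<le> ?v a + ?v b" using adj mod0_iff pos[OF aV] pos[OF bV] unfolding zd_adj_def by auto
      moreover have "?v a + ?v b < \<alpha>"
      proof (cases "a = ?s")
        case True then show ?thesis using b ab s by auto
      next
        case False
        then have "?v a + m < \<alpha>" using a by auto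
        moreover have "?v b \<le> m" using b s mb by auto
        ultimately show ?thesis by linarith
      qed
      ultimately show False by simp
    qed
  qed
  have dom: "\<forall>x\<in>zd_vertices n - insert ?s ?L. \<exists>u\<in>insert ?s ?L. zd_adj n x u"
  proof
    fix x assume x: "x \<in> zd_vertices n - insert ?s ?L"
    then have "\<alpha> \<le> ?v x + ?v ?s" "x \<noteq> ?s" using s by auto
    moreover have "(x * ?s) mod n = 0" using mod0_iff[of x ?s] pos[of x] pos[of ?s] x s \<open>\<alpha> \<le> ?v x + ?v ?s\<close> by auto
    ultimately have "zd_adj n x ?s" unfolding zd_adj_def by auto
    then show "\<exists>u\<in>insert ?s ?L. zd_adj n x u" by blast
  qed
  show ?thesis unfolding indep_dom_set_def using indep dom s by auto
qed

lemma pdvd_diff: "1 \<le> x \<Longrightarrow> p dvd p ^ (\<alpha> - 1) - p ^ x"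
  using a3 by (intro dvd_diff_nat) (auto simp: dvd_power)

lemma no2: "sz c \<Longrightarrow> c \<noteq> 2"
proof
  assume "sz c" "c = 2"
  then consider m where "\<alpha> \<le> 2 * m" "p ^ (\<alpha> - 1) - p ^ m = 1"
    | k where "\<alpha> = 2 * k + 1" "p ^ (\<alpha> - 1) - p ^ k = 2" unfolding sz_def by auto
  then show False
  proof cases
    case 1
    then have "1 \<le> m" using a3 by auto
    then have "p dvd 1" using pdvd_diff 1 by metis
    then show False using p2 by simp
  next
    case 2
    then have "1 \<le> k" using a3 by auto
    then have "p dvd 2" using pdvd_diff 2 by metis
    then show False using p2 by (auto dest: dvd_imp_le)
  qed
qed

lemma nodiff2: "sz c \<Longrightarrow> sz c' \<Longrightarrow> c' \<noteq> c + 2"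
proof
  assume c: "sz c" and c': "sz c'" and eq: "c' = c + 2"
  let ?P = "p ^ (\<alpha> - 1)"
  have pm: "\<And>x. x \<le> \<alpha> - 1 \<Longrightarrow> p ^ x \<le> ?P" using p2 by (intro power_increasing) auto

  show False
  proof (cases "\<exists>m. \<alpha> \<le> 2 * m \<and> m < \<alpha> \<and> c = ?P - p ^ m + 1")
    case True
    then obtain m where m: "\<alpha> \<le> 2 * m" "m < \<alpha>" "c = ?P - p ^ m + 1" by auto
    have m1: "1 \<le> m" using m a3 by auto
    show False
    proof (cases "\<exists>m. \<alpha> \<le> 2 * m \<and> m < \<alpha> \<and> c' = ?P - p ^ m + 1")
      case True
      then obtain m' where m': "\<alpha> \<le> 2 * m'" "m' < \<alpha>" "c' = ?P - p ^ m' + 1" by auto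
      have "1 \<le> m'" using m' a3 by auto
      have "p ^ m \<le> ?P" using m by (intro pm) linarith
      moreover have "p ^ m' \<le> ?P" using m' by (intro pm) linarith
      ultimately have "p ^ m = p ^ m' + 2" using m m' eq by linarith
      have A: "p dvd p ^ m" "p dvd p ^ m'" using m1 \<open>1 \<le> m'\<close> by (auto simp: dvd_power)
      from A have "p dvd p ^ m - p ^ m'" by (intro dvd_diff_nat)
      then have "p dvd 2" using \<open>p ^ m = p ^ m' + 2\<close> by simp
      then show False using p2 by (auto dest: dvd_imp_le)
    next
      case False
      then obtain k where k: "\<alpha> = 2 * k + 1" "c' = ?P - p ^ k" using c' unfolding sz_def by auto
      have "k + 1 \<le> m" using k m by auto
      then have "p ^ (k + 1) \<le> p ^ m" using p2 by (intro power_increasing) auto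
      then have "p * p ^ k \<le> p ^ m" by simp
      moreover have "3 * p ^ k \<le> p * p ^ k" using p2 by simp
      moreover have "p ^ k \<le> ?P" using k by (intro pm) auto
      moreover have "p ^ m \<le> ?P" using m by (intro pm) linarith
      moreover have "p \<le> p ^ k" using power_increasing[of 1 k p] k a3 p2 by auto
      ultimately show False using m(3) k(2) eq p2 by linarith
    qed
  next
    case False
    then obtain k where k: "\<alpha> = 2 * k + 1" "c = ?P - p ^ k" using c unfolding sz_def by auto
    have k1: "1 \<le> k" using k a3 by auto
    show False
    proof (cases "\<exists>m. \<alpha> \<le> 2 * m \<and> m < \<alpha> \<and> c' = ?P - p ^ m + 1")
      case True
      then obtain m where m: "\<alpha> \<le> 2 * m" "m < \<alpha>" "c' = ?P - p ^ m + 1" by auto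
      have "k \<le> m" using k m by auto
      then have "p ^ k \<le> p ^ m" using p2 by (intro power_increasing) auto
      moreover have "p ^ k \<le> ?P" using k by (intro pm) auto
      moreover have "p ^ m \<le> ?P" using m by (intro pm) linarith
      moreover have "p \<le> p ^ k" using power_increasing[of 1 k p] k a3 p2 by auto
      ultimately show False using m(3) k(2) eq p2 by linarith
    next
      case False
      then obtain k' where k': "\<alpha> = 2 * k' + 1" "c' = ?P - p ^ k'" using c' unfolding sz_def by auto
      then have "k = k'" using k by auto
      then show False using k k' eq by simp
    qed
  qed
qed

lemma fin_ids: "finite {S. indep_dom_set n S \<and> card S = k}"
  by (rule finite_subset[of _ "Pow (zd_vertices n)"]) (auto simp: indep_dom_set_def fin_V)

lemma num_pos: "0 < num_ids n k \<longleftrightarrow> (\<exists>S. indep_dom_set n S \<and> card S = k)"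
  unfolding num_ids_def using fin_ids by (auto simp: card_gt_0_iff)

lemma coeff_D: "coeff (indep_dom_poly n) k = num_ids n k"
proof -
  have "coeff (indep_dom_poly n) k = (\<Sum>i\<le>card (zd_vertices n). if i = k then num_ids n i else 0)"
    unfolding indep_dom_poly_def by (simp add: coeff_sum)
  also have "\<dots> = (if k \<le> card (zd_vertices n) then num_ids n k else 0)"
    by (simp add: sum.delta)
  also have "\<dots> = num_ids n k"
  proof (cases "k \<le> card (zd_vertices n)")
    case False
    have "\<not> (\<exists>S. indep_dom_set n S \<and> card S = k)"
    proof
      assume "\<exists>S. indep_dom_set n S \<and> card S = k"
      then obtain S where "S \<subseteq> zd_vertices n" "card S = k" unfolding indep_dom_set_def by auto
      then show False using False card_mono[OF fin_V] by fastforce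
    qed
    then show ?thesis using False num_pos[of k] by auto
  qed simp
  finally show ?thesis .
qed

lemma main: "log_concave (indep_dom_poly n) \<and> \<not> unimodal (indep_dom_poly n)"
proof
  let ?D = "indep_dom_poly n"
  show "log_concave ?D"
    unfolding log_concave_def
  proof (intro allI impI)
    fix j :: nat assume j: "1 \<le> j \<and> j + 1 \<le> degree ?D"
    have z: "num_ids n (j - 1) * num_ids n (j + 1) = 0"
    proof (rule ccontr)
      assume "num_ids n (j - 1) * num_ids n (j + 1) \<noteq> 0"
      then obtain S T where ST: "indep_dom_set n S" "card S = j - 1" "indep_dom_set n T" "card T = j + 1"
        using num_pos by (metis mult_is_0 zero_less_iff_neq_zero)
      then have h: "sz (j - 1)" "sz (j + 1)" using ids_size ST by metis+
      have "j + 1 = (j - 1) + 2" using j by arith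
      then show False using nodiff2[OF h] by blast
    qed
    show "coeff ?D (j - 1) * coeff ?D (j + 1) \<le> (coeff ?D j)^2" unfolding coeff_D z by simp
  qed
  have c0: "coeff ?D 0 = 0"
  proof -
    have "\<not> (\<exists>S. indep_dom_set n S \<and> card S = 0)"
    proof
      assume "\<exists>S. indep_dom_set n S \<and> card S = 0"
      then obtain S where S: "indep_dom_set n S" "card S = 0" by auto
      then have "finite S" using fin_V finite_subset unfolding indep_dom_set_def by blast
      then show False using S ids_nonempty by auto
    qed
    then have "\<not> 0 < num_ids n 0" using num_pos[of 0] by blast
    then show ?thesis by (simp add: coeff_D)
  qed
  have c2: "coeff ?D 2 = 0"
    using num_pos[of 2] ids_size no2 by (auto simp: coeff_D)
  have c1: "coeff ?D 1 > 0"
  proof -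
    have W: "indep_dom_set n (insert (p ^ (\<alpha> - 1)) {a\<in>zd_vertices n. multiplicity p a + (\<alpha> - 1) < \<alpha>})"
      using a3 by (intro ids_witness) auto
    have E: "{a\<in>zd_vertices n. multiplicity p a + (\<alpha> - 1) < \<alpha>} = {}" using v_bounds by fastforce
    have "indep_dom_set n {p ^ (\<alpha> - 1)}" using W unfolding E .
    then have "\<exists>S. indep_dom_set n S \<and> card S = 1" by (intro exI[of _ "{p ^ (\<alpha> - 1)}"]) simp
    then show ?thesis using num_pos[of 1] coeff_D by simp
  qed
  obtain d where d: "3 \<le> d" "coeff ?D d > 0"
  proof -
    let ?L = "{a\<in>zd_vertices n. multiplicity p a + (\<alpha> - 2) < \<alpha>}"
    have W: "indep_dom_set n (insert (p ^ (\<alpha> - 2)) ?L)"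
      using a3 by (intro ids_witness) auto
    have "?L = {a\<in>zd_vertices n. \<not> p ^ 2 dvd a}" using dvd_iff_v verts a3 by auto
    then have cL: "card ?L = p ^ (\<alpha> - 1) - p ^ (\<alpha> - 2)" using card_L[of 2] a3 by simp
    have "\<alpha> - 1 = Suc (\<alpha> - 2)" using a3 by arith
    then have e: "p ^ (\<alpha> - 1) = p * p ^ (\<alpha> - 2)" by (metis power_Suc)
    have "p ^ 1 \<le> p ^ (\<alpha> - 2)" using p2 a3 by (intro power_increasing) auto
    then have "3 \<le> p ^ (\<alpha> - 2)" using p2 by simp
    moreover have "p * p ^ (\<alpha> - 2) - p ^ (\<alpha> - 2) = (p - 1) * p ^ (\<alpha> - 2)" by (simp add: diff_mult_distrib)
    moreover have "1 * p ^ (\<alpha> - 2) \<le> (p - 1) * p ^ (\<alpha> - 2)" using p2 by (intro mult_le_mono1) auto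
    ultimately have "3 \<le> p * p ^ (\<alpha> - 2) - p ^ (\<alpha> - 2)" by linarith
    then have "3 \<le> card ?L" using cL e by simp
    moreover have "card ?L \<le> card (insert (p ^ (\<alpha> - 2)) ?L)" using fin_V by (intro card_mono) auto
    ultimately show ?thesis using that[of "card (insert (p ^ (\<alpha> - 2)) ?L)"] W num_pos by (auto simp: coeff_D)
  qed
  have dd: "d \<le> degree ?D" using d by (intro le_degree) auto
  show "\<not> unimodal ?D"
  proof
    assume "unimodal ?D"
    then obtain t where t: "t \<le> degree ?D" "\<forall>i<t. coeff ?D i \<le> coeff ?D (Suc i)"
      "\<forall>i. t \<le> i \<and> i < degree ?D \<longrightarrow> coeff ?D (Suc i) \<le> coeff ?D i" unfolding unimodal_def by auto
    consider "t = 0" | "t = 1" | "2 \<le> t" by linarith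
    then show False
    proof cases
      case 1 then show False using t(3)[rule_format, of 0] dd d c0 c1 by auto
    next
      case 2
      have "\<forall>i. 2 \<le> i \<longrightarrow> i \<le> degree ?D \<longrightarrow> coeff ?D i = 0"
      proof (intro allI)
        fix i show "2 \<le> i \<longrightarrow> i \<le> degree ?D \<longrightarrow> coeff ?D i = 0"
        proof (induction i)
          case (Suc i)
          show ?case
          proof (intro impI)
            assume h: "2 \<le> Suc i" "Suc i \<le> degree ?D"
            show "coeff ?D (Suc i) = 0"
            proof (cases "Suc i = 2")
              case True then show ?thesis using c2 by (simp add: numeral_2_eq_2)
            next
              case False
              then have "2 \<le> i" "i \<le> degree ?D" using h by auto
              then have "coeff ?D i = 0" using Suc.IH by blast
              moreover have "coeff ?D (Suc i) \<le> coeff ?D i" using t(3) 2 h \<open>2 \<le> i\<close> by auto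
              ultimately show ?thesis by simp
            qed
          qed
        qed simp
      qed
      then show False using d dd by auto
    next
      case 3 then show False using t(2)[rule_format, of 1] c1 c2 by (auto simp: numeral_2_eq_2)
    qed
  qed
qed

end

theorem mainTheorem6:
  fixes p \<alpha> n :: nat
  assumes "prime p" and "p > 2" and "\<alpha> \<ge> 3" and "n = p ^ \<alpha>"
  shows "log_concave (indep_dom_poly n) \<and> \<not> unimodal (indep_dom_poly n)"
  using main[OF assms] .

end
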